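(* Let $\alpha$ be a unit speed Frenet curve in $\mathbb{E}^3$ with Frenet frame $\{T,N,B\}$, curvature $\kappa$ and torsion $\tau$, let $\beta$ be an osculating mate of $\alpha$, let $\theta(s)=\int\kappa ds$ be the antiderivative of $\kappa$ with $\beta'=\sin\theta\,T+\cos\theta\,N$, and let $d(s)=\|\beta(s)\|$ be the distance function of $\beta$. Then the position vector of $\beta$ is $$\beta=\left[\int\left(-\frac{\kappa}{\tau}h'+\sin\theta\right)ds\right]T-\frac{h'}{\tau}N+hB,\qquad\text{where } h(s)=\frac{(dd')'-1}{\tau\cos\theta}$$ (for a suitable antiderivative in the first coefficient).
   Context: $\alpha:I\to\mathbb{E}^3$ is parametrized by arclength $s$, with $T'=\kappa N$, $N'=-\kappa T+\tau B$, $B'=-\tau N$, $\kappa>0$. An osculating mate of $\alpha$ is a curve $\beta(s)=\int(x_1T+x_2N)ds$ with smooth $x_1,x_2$, $x_1^2+x_2^2=1$ and $\beta''\perp\mathrm{span}\{T,N\}$; $\beta$ is assumed to be a Frenet curve (so $\tau\cos\theta\neq0$). The prime denotes $d/ds$. *)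

theory Defs
  imports "HOL-Analysis.Analysis"
begin

end

theory Submission
  imports Defs
begin

lemma inner_vd:
  fixes f g :: "real \<Rightarrow> 'a::real_inner"
  assumes "(f has_vector_derivative f') (at s)" "(g has_vector_derivative g') (at s)"
  shows "((\<lambda>t. f t \<bullet> g t) has_real_derivative (f' \<bullet> g s + f s \<bullet> g')) (at s)"
proof -
  have "((\<lambda>t. f t \<bullet> g t) has_derivative (\<lambda>h. f s \<bullet> (h *\<^sub>R g') + (h *\<^sub>R f') \<bullet> g s)) (at s)"
    using has_derivative_inner[OF assms[unfolded has_vector_derivative_def]] .
  then show ?thesis
    unfolding has_field_derivative_def
    by (rule has_derivative_eq_rhs) (auto simp: algebra_simps)
qed

lemma triple: "cross3 (cross3 a b) c = (a \<bullet> c) *\<^sub>R b - (b \<bullet> c) *\<^sub>R a" for a b c :: "real^3"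
  by (simp add: cross3_simps forall_3)

lemma decomp:
  fixes T N v :: "real^3"
  assumes "norm T = 1" "norm N = 1" "T \<bullet> N = 0"
  shows "v = (v \<bullet> T) *\<^sub>R T + (v \<bullet> N) *\<^sub>R N + (v \<bullet> cross3 T N) *\<^sub>R cross3 T N"
proof -
  define B where "B = cross3 T N"
  define w where "w = v - (v \<bullet> T) *\<^sub>R T - (v \<bullet> N) *\<^sub>R N"
  have TT: "T \<bullet> T = 1" "N \<bullet> N = 1" using assms by (simp_all add: dot_square_norm)
  have wT: "T \<bullet> w = 0" "N \<bullet> w = 0" using TT assms(3)
    by (simp_all add: w_def inner_diff_right inner_commute)
  have "cross3 B w = 0" unfolding B_def triple using wT by simp
  have Bn: "(norm B)^2 = 1" using norm_cross_dot[of T N] assms by (simp add: B_def)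
  hence BB: "B \<bullet> B = 1" by (simp add: power2_norm_eq_inner)
  hence B0: "B \<noteq> 0" by auto
  have BT: "B \<bullet> T = 0" "B \<bullet> N = 0" by (simp_all add: B_def dot_cross_self)
  have "w = (v \<bullet> B) *\<^sub>R B"
  proof (rule cross_dot_cancel[OF _ _ B0])
    show "B \<bullet> w = B \<bullet> ((v \<bullet> B) *\<^sub>R B)" using BB BT
      by (simp add: w_def inner_diff_right inner_commute)
    show "cross3 B w = cross3 B ((v \<bullet> B) *\<^sub>R B)" using \<open>cross3 B w = 0\<close>
      by (simp add: cross_mult_right)
  qed
  then show ?thesis unfolding w_def B_def by (simp add: algebra_simps)
qed

theorem theorem8:
  fixes I :: "real set"
    and \<alpha> \<beta> T N B :: "real \<Rightarrow> real^3"
    and \<kappa> \<tau> x1 x2 \<theta> :: "real \<Rightarrow> real"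
  assumes I: "open I" "is_interval I" "I \<noteq> {}"
    and frame: "\<And>s. s \<in> I \<Longrightarrow> norm (T s) = 1 \<and> norm (N s) = 1 \<and> T s \<bullet> N s = 0
                                 \<and> B s = cross3 (T s) (N s)"
    and alpha': "\<And>s. s \<in> I \<Longrightarrow> (\<alpha> has_vector_derivative T s) (at s)"
    and T': "\<And>s. s \<in> I \<Longrightarrow> (T has_vector_derivative \<kappa> s *\<^sub>R N s) (at s)"
    and N': "\<And>s. s \<in> I \<Longrightarrow> (N has_vector_derivative (- \<kappa> s *\<^sub>R T s + \<tau> s *\<^sub>R B s)) (at s)"
    and B': "\<And>s. s \<in> I \<Longrightarrow> (B has_vector_derivative (- \<tau> s *\<^sub>R N s)) (at s)"
    and kappa_pos: "\<And>s. s \<in> I \<Longrightarrow> \<kappa> s > 0"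
    and x_smooth: "\<And>s. s \<in> I \<Longrightarrow> x1 differentiable (at s) \<and> x2 differentiable (at s)"
    and x_unit: "\<And>s. s \<in> I \<Longrightarrow> (x1 s)\<^sup>2 + (x2 s)\<^sup>2 = 1"
    and beta': "\<And>s. s \<in> I \<Longrightarrow> (\<beta> has_vector_derivative (x1 s *\<^sub>R T s + x2 s *\<^sub>R N s)) (at s)"
    and beta'': "\<And>s. s \<in> I \<Longrightarrow> \<exists>v. ((\<lambda>t. x1 t *\<^sub>R T t + x2 t *\<^sub>R N t) has_vector_derivative v) (at s)
                                  \<and> v \<bullet> T s = 0 \<and> v \<bullet> N s = 0"
    and theta: "\<And>s. s \<in> I \<Longrightarrow> (\<theta> has_real_derivative \<kappa> s) (at s)"
    and theta_beta: "\<And>s. s \<in> I \<Longrightarrow> x1 s = sin (\<theta> s) \<and> x2 s = cos (\<theta> s)"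
    and frenet_beta: "\<And>s. s \<in> I \<Longrightarrow> \<tau> s * cos (\<theta> s) \<noteq> 0"
    and d_diff: "\<And>s. s \<in> I \<Longrightarrow> (\<lambda>t. norm (\<beta> t)) differentiable (at s)"
  shows "let d = (\<lambda>t. norm (\<beta> t));
             h = (\<lambda>s. (deriv (\<lambda>t. d t * deriv d t) s - 1) / (\<tau> s * cos (\<theta> s)))
         in \<exists>A. (\<forall>s\<in>I. (A has_real_derivative (- (\<kappa> s / \<tau> s) * deriv h s + sin (\<theta> s))) (at s))
              \<and> (\<forall>s\<in>I. \<beta> s = A s *\<^sub>R T s - (deriv h s / \<tau> s) *\<^sub>R N s + h s *\<^sub>R B s)"

proof -
  define d where "d = (\<lambda>t. norm (\<beta> t))"
  define a where "a = (\<lambda>t. \<beta> t \<bullet> T t)"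
  define b where "b = (\<lambda>t. \<beta> t \<bullet> N t)"
  define c where "c = (\<lambda>t. \<beta> t \<bullet> B t)"
  define p where "p = (\<lambda>t. sin (\<theta> t) * a t + cos (\<theta> t) * b t)"
  define h where "h = (\<lambda>s. (deriv (\<lambda>t. d t * deriv d t) s - 1) / (\<tau> s * cos (\<theta> s)))"
  have fr: "T s \<bullet> T s = 1" "N s \<bullet> N s = 1" "T s \<bullet> N s = 0" "N s \<bullet> T s = 0"
     "B s \<bullet> T s = 0" "B s \<bullet> N s = 0" "T s \<bullet> B s = 0" "N s \<bullet> B s = 0" if "s \<in> I" for s
    using frame[OF that] by (auto simp: dot_square_norm inner_commute dot_cross_self)
  have bd: "(\<beta> has_vector_derivative (sin (\<theta> s) *\<^sub>R T s + cos (\<theta> s) *\<^sub>R N s)) (at s)" if "s \<in> I" for s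
    using beta'[OF that] theta_beta[OF that] by simp
  have da: "(a has_real_derivative (sin (\<theta> s) + \<kappa> s * b s)) (at s)" if s: "s \<in> I" for s
    using inner_vd[OF bd[OF s] T'[OF s]] fr[OF s]
    by (simp add: a_def b_def inner_add_left inner_add_right inner_commute)
  have db: "(b has_real_derivative (cos (\<theta> s) - \<kappa> s * a s + \<tau> s * c s)) (at s)" if s: "s \<in> I" for s
    using inner_vd[OF bd[OF s] N'[OF s]] fr[OF s]
    by (simp add: a_def b_def c_def inner_add_left inner_add_right inner_diff_right inner_commute algebra_simps)
  have dc: "(c has_real_derivative (- \<tau> s * b s)) (at s)" if s: "s \<in> I" for s
    using inner_vd[OF bd[OF s] B'[OF s]] fr[OF s]
    by (simp add: b_def c_def inner_add_left inner_add_right inner_commute)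
  have dp: "(p has_real_derivative (1 + \<tau> s * cos (\<theta> s) * c s)) (at s)" if s: "s \<in> I" for s
  proof -
    have "(p has_real_derivative
       (cos (\<theta> s) * \<kappa> s * a s + sin (\<theta> s) * (sin (\<theta> s) + \<kappa> s * b s)
        + (- sin (\<theta> s) * \<kappa> s * b s + cos (\<theta> s) * (cos (\<theta> s) - \<kappa> s * a s + \<tau> s * c s)))) (at s)"
    proof -
      have s1: "((\<lambda>t. sin (\<theta> t)) has_real_derivative cos (\<theta> s) * \<kappa> s) (at s)"
        using theta[OF s] by (auto intro!: derivative_eq_intros)
      have c1: "((\<lambda>t. cos (\<theta> t)) has_real_derivative - sin (\<theta> s) * \<kappa> s) (at s)"
        using theta[OF s] by (auto intro!: derivative_eq_intros)
      show ?thesis unfolding p_def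
        using DERIV_add[OF DERIV_mult[OF s1 da[OF s]] DERIV_mult[OF c1 db[OF s]]]
        by (simp add: algebra_simps)
    qed
    moreover have "cos (\<theta> s) * \<kappa> s * a s + sin (\<theta> s) * (sin (\<theta> s) + \<kappa> s * b s)
        + (- sin (\<theta> s) * \<kappa> s * b s + cos (\<theta> s) * (cos (\<theta> s) - \<kappa> s * a s + \<tau> s * c s))
        = 1 + \<tau> s * cos (\<theta> s) * c s"
      using sin_cos_squared_add[of "\<theta> s"] by (simp add: algebra_simps power2_eq_square)
    ultimately show ?thesis by simp
  qed
  have dd: "d t * deriv d t = p t" if t: "t \<in> I" for t
  proof -
    have d1: "(d has_real_derivative deriv d t) (at t)"
      using d_diff[OF t] unfolding d_def by (simp add: DERIV_deriv_iff_real_differentiable)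
    have e1: "((\<lambda>t. d t * d t) has_real_derivative (deriv d t * d t + d t * deriv d t)) (at t)"
      using DERIV_mult[OF d1 d1] by (simp add: algebra_simps)
    have e2: "((\<lambda>t. \<beta> t \<bullet> \<beta> t) has_real_derivative
       ((sin (\<theta> t) *\<^sub>R T t + cos (\<theta> t) *\<^sub>R N t) \<bullet> \<beta> t + \<beta> t \<bullet> (sin (\<theta> t) *\<^sub>R T t + cos (\<theta> t) *\<^sub>R N t))) (at t)"
      by (rule inner_vd[OF bd[OF t] bd[OF t]])
    have "(\<lambda>t. d t * d t) = (\<lambda>t. \<beta> t \<bullet> \<beta> t)"
      by (auto simp: d_def dot_square_norm power2_eq_square)
    with e1 e2 have "deriv d t * d t + d t * deriv d t =
       (sin (\<theta> t) *\<^sub>R T t + cos (\<theta> t) *\<^sub>R N t) \<bullet> \<beta> t + \<beta> t \<bullet> (sin (\<theta> t) *\<^sub>R T t + cos (\<theta> t) *\<^sub>R N t)"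
      using DERIV_unique by metis
    then show ?thesis
      by (simp add: p_def a_def b_def inner_add_left inner_add_right inner_commute)
  qed
  have hc: "h s = c s" if s: "s \<in> I" for s
  proof -
    have "((\<lambda>t. d t * deriv d t) has_real_derivative (1 + \<tau> s * cos (\<theta> s) * c s)) (at s)"
      using has_field_derivative_transform_within_open[OF dp[OF s] I(1) s] dd by simp
    hence "deriv (\<lambda>t. d t * deriv d t) s = 1 + \<tau> s * cos (\<theta> s) * c s" by (rule DERIV_imp_deriv)
    thus ?thesis using frenet_beta[OF s] by (simp add: h_def)
  qed
  have dh: "deriv h s = - \<tau> s * b s" if s: "s \<in> I" for s
  proof -
    have "(h has_real_derivative (- \<tau> s * b s)) (at s)"
      using has_field_derivative_transform_within_open[OF dc[OF s] I(1) s] hc by simp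
    thus ?thesis by (rule DERIV_imp_deriv)
  qed
  have tau0: "\<tau> s \<noteq> 0" if "s \<in> I" for s using frenet_beta[OF that] by auto
  have "\<exists>A. (\<forall>s\<in>I. (A has_real_derivative (- (\<kappa> s / \<tau> s) * deriv h s + sin (\<theta> s))) (at s))
              \<and> (\<forall>s\<in>I. \<beta> s = A s *\<^sub>R T s - (deriv h s / \<tau> s) *\<^sub>R N s + h s *\<^sub>R B s)"
  proof (intro exI[of _ a] conjI ballI)
    fix s assume s: "s \<in> I"
    show "(a has_real_derivative (- (\<kappa> s / \<tau> s) * deriv h s + sin (\<theta> s))) (at s)"
      using da[OF s] dh[OF s] tau0[OF s] by (simp add: add.commute)
    show "\<beta> s = a s *\<^sub>R T s - (deriv h s / \<tau> s) *\<^sub>R N s + h s *\<^sub>R B s"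
      using decomp[of "T s" "N s" "\<beta> s"] frame[OF s] dh[OF s] hc[OF s] tau0[OF s]
      by (simp add: a_def b_def c_def)
  qed
  then show ?thesis unfolding Let_def d_def h_def .
qed

end
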